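(* Let $d=2$ and $E\subset[1,2]$. Suppose $M_E$ is bounded from $L^{p,1}_{rad}(\mathbb{R}^2)$ to $L^{q,\infty}(\mathbb{R}^2)$. Then there is a constant $C$ such that for any interval $I\subset[1,2]$ and $\delta>0$ with $\delta\le|I|\le1$, $$\delta^{\frac12+\frac1q}|I|^{\frac1q-\frac12}N(E\cap I,\delta)^{\frac1q}\le C\delta^{\frac1p}.$$
   Context: $M_Ef(x)=\sup_{t\in E}\left|\int_{\mathbb{S}^{1}}f(x-ty)\,d\sigma(y)\right|$ with $\sigma$ normalized arc-length on $\mathbb{S}^1$. $L^{p,s}$ is the Lorentz space; $L^{p,1}_{rad}$ its radial functions. $N(F,\delta)$ is the minimal number of intervals of length $\delta$ covering $F$. *)

theory Defs
  imports "HOL-Analysis.Analysis"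
begin

text \<open>The plane R^2 is modelled by the type complex; the unit circle S^1 is
  parametrised by cis theta, theta in [0, 2 pi], so normalised arc-length
  measure sigma corresponds to (1/(2 pi)) d theta.\<close>

definition outer_leb :: "complex set \<Rightarrow> ennreal" where
  "outer_leb A = (INF B \<in> {B \<in> sets lebesgue. A \<subseteq> B}. emeasure lebesgue B)"

definition ennpow :: "ennreal \<Rightarrow> real \<Rightarrow> ennreal" where
  "ennpow e a = (if e = \<infinity> then \<infinity> else ennreal (enn2real e powr a))"

definition distrib :: "(complex \<Rightarrow> ennreal) \<Rightarrow> real \<Rightarrow> ennreal" where
  "distrib g l = outer_leb {x. ennreal l < g x}"

definition lorentz_p1 :: "real \<Rightarrow> (complex \<Rightarrow> real) \<Rightarrow> ennreal" where
  "lorentz_p1 p f = ennreal p *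
     (\<integral>\<^sup>+ l. indicator {0<..} l * ennpow (distrib (\<lambda>x. ennreal \<bar>f x\<bar>) l) (1 / p) \<partial>lborel)"

definition weak_Lq :: "real \<Rightarrow> (complex \<Rightarrow> ennreal) \<Rightarrow> ennreal" where
  "weak_Lq q g = (SUP l \<in> {0<..}. ennreal l * ennpow (distrib g l) (1 / q))"

definition radial :: "(complex \<Rightarrow> real) \<Rightarrow> bool" where
  "radial f \<longleftrightarrow> (\<forall>x y. norm x = norm y \<longrightarrow> f x = f y)"

definition circ_avg :: "(complex \<Rightarrow> real) \<Rightarrow> complex \<Rightarrow> real \<Rightarrow> real" where
  "circ_avg f x t = (1 / (2 * pi)) *
     (\<integral>\<theta>\<in>{0..2*pi}. f (x - complex_of_real t * cis \<theta>) \<partial>lborel)"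

definition max_sph :: "real set \<Rightarrow> (complex \<Rightarrow> real) \<Rightarrow> complex \<Rightarrow> ennreal" where
  "max_sph E f x = (SUP t \<in> E. ennreal \<bar>circ_avg f x t\<bar>)"

definition cov_num :: "real set \<Rightarrow> real \<Rightarrow> nat" where
  "cov_num F \<delta> = (LEAST n. \<exists>c :: nat \<Rightarrow> real. F \<subseteq> (\<Union>i<n. {c i .. c i + \<delta>}))"

end

theory Submission
  imports Defs
begin


lemma leb_borel: "A \<in> sets borel \<Longrightarrow> emeasure lebesgue A = emeasure lborel A"
  by (simp add: emeasure_completion)

lemma ann_borel: "{z::complex. r1 \<le> cmod z \<and> cmod z \<le> r2} \<in> sets borel"
  by measurable

lemma ann_meas:
  assumes "0 \<le> r1" "r1 \<le> r2"
  shows "emeasure lebesgue {z::complex. r1 \<le> cmod z \<and> cmod z \<le> r2} = ennreal (pi * (r2^2 - r1^2))"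
proof -
  have eq: "{z::complex. r1 \<le> cmod z \<and> cmod z \<le> r2} = cball 0 r2 - ball 0 r1"
    by (auto simp: dist_norm)
  have u2: "unit_ball_vol (real DIM(complex)) = pi" using unit_ball_vol_even[of 1] by simp
  have "emeasure lborel (cball (0::complex) r2 - ball 0 r1) = emeasure lborel (cball (0::complex) r2) - emeasure lborel (ball (0::complex) r1)"
    using assms emeasure_lborel_ball_finite[of "0::complex" r1] by (intro emeasure_Diff) auto
  also have "\<dots> = ennreal (pi * r2^2) - ennreal (pi * r1^2)"
    using assms emeasure_cball[of r2 "0::complex"] emeasure_ball[of r1 "0::complex"] u2 by simp
  also have "\<dots> = ennreal (pi * (r2^2 - r1^2))"
    using assms by (subst ennreal_minus) (auto simp: algebra_simps intro!: mult_left_mono power_mono)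
  finally show ?thesis using eq leb_borel ann_borel by metis
qed

lemma outer_leb_le: "A \<in> sets lebesgue \<Longrightarrow> outer_leb A \<le> emeasure lebesgue A"
  unfolding outer_leb_def by (rule INF_lower) auto

lemma outer_leb_ge: "X \<in> sets lebesgue \<Longrightarrow> X \<subseteq> S \<Longrightarrow> emeasure lebesgue X \<le> outer_leb S"
  unfolding outer_leb_def proof (rule INF_greatest)
  fix B assume "X \<in> sets lebesgue" "X \<subseteq> S" "B \<in> {B \<in> sets lebesgue. S \<subseteq> B}"
  then show "emeasure lebesgue X \<le> emeasure lebesgue B" by (intro emeasure_mono) auto
qed

lemma outer_leb_empty: "outer_leb {} = 0"
  using outer_leb_le[of "{}"] by simp

lemma ennpow_mono: "0 \<le> a \<Longrightarrow> e1 \<le> e2 \<Longrightarrow> ennpow e1 a \<le> ennpow e2 a"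
  unfolding ennpow_def
  by (auto simp: top_unique less_top intro!: powr_mono2 enn2real_mono)

lemma ennpow_ennreal: "0 \<le> v \<Longrightarrow> ennpow (ennreal v) a = ennreal (v powr a)"
  unfolding ennpow_def by simp




lemma lorentz_ann:
  assumes p: "1 \<le> p" and r: "0 \<le> r1" "r1 \<le> r2"
  shows "lorentz_p1 p (indicator {z::complex. r1 \<le> cmod z \<and> cmod z \<le> r2})
     \<le> ennreal (p * (pi*(r2^2 - r1^2)) powr (1/p))"
proof -
  define Ann where "Ann = {z::complex. r1 \<le> cmod z \<and> cmod z \<le> r2}"
  define V where "V = pi*(r2^2 - r1^2)"
  have V0: "0 \<le> V" unfolding V_def using r by (auto intro!: mult_nonneg_nonneg power_mono)
  have AnnL: "Ann \<in> sets lebesgue" unfolding Ann_def using ann_borel by auto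
  have pw: "indicator {0<..} l * ennpow (distrib (\<lambda>x. ennreal \<bar>indicator Ann x :: real\<bar>) l) (1/p)
        \<le> ennreal (V powr (1/p)) * indicator {0<..1} l" for l :: real
  proof (cases "0 < l")
    case False then show ?thesis by simp
  next
    case True
    show ?thesis
    proof (cases "l < 1")
      case True
      have "{x. ennreal l < ennreal \<bar>indicator Ann x :: real\<bar>} \<subseteq> Ann"
        using \<open>0 < l\<close> by (auto simp: indicator_def)
      hence dV: "distrib (\<lambda>x. ennreal \<bar>indicator Ann x :: real\<bar>) l \<le> ennreal V"
      proof -
        have "outer_leb {x. ennreal l < ennreal \<bar>indicator Ann x :: real\<bar>} \<le> outer_leb Ann"
          unfolding outer_leb_def using \<open>{x. ennreal l < ennreal \<bar>indicator Ann x :: real\<bar>} \<subseteq> Ann\<close>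
          by (intro INF_mono) auto
        also have "\<dots> \<le> emeasure lebesgue Ann" by (rule outer_leb_le[OF AnnL])
        also have "\<dots> = ennreal V" unfolding Ann_def V_def by (rule ann_meas[OF r])
        finally show ?thesis unfolding distrib_def .
      qed
      have "ennpow (distrib (\<lambda>x. ennreal \<bar>indicator Ann x :: real\<bar>) l) (1/p) \<le> ennreal (V powr (1/p))"
        using ennpow_mono[of "1/p", OF _ dV] ennpow_ennreal[OF V0] p by simp
      then show ?thesis using \<open>0 < l\<close> True by simp
    next
      case False
      have "{x. ennreal l < ennreal \<bar>indicator Ann x :: real\<bar>} = {}"
        using False \<open>0 < l\<close> by (auto simp: indicator_def)
      hence "distrib (\<lambda>x. ennreal \<bar>indicator Ann x :: real\<bar>) l = 0"
        unfolding distrib_def by (simp add: outer_leb_empty)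
      then show ?thesis by (simp add: ennpow_def)
    qed
  qed
  have "(\<integral>\<^sup>+ l. indicator {0<..} l * ennpow (distrib (\<lambda>x. ennreal \<bar>indicator Ann x :: real\<bar>) l) (1/p) \<partial>lborel)
      \<le> (\<integral>\<^sup>+ l. ennreal (V powr (1/p)) * indicator {0<..1::real} l \<partial>lborel)"
    using pw[where l=x for x] by (intro nn_integral_mono) (simp add: mult.commute)
  also have "\<dots> = ennreal (V powr (1/p))"
    by (subst nn_integral_cmult_indicator) auto
  finally have "lorentz_p1 p (indicator Ann) \<le> ennreal p * ennreal (V powr (1/p))"
    unfolding lorentz_p1_def by (intro mult_left_mono) auto
  then show ?thesis unfolding Ann_def V_def using p by (simp add: ennreal_mult)
qed



lemma cis_meas[measurable]: "cis \<in> borel_measurable borel"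
  by (intro borel_measurable_continuous_onI continuous_intros)
lemma cos_lb: "1 - u^2/2 \<le> cos (u::real)"
proof -
  have "cos u = 1 - 2 * sin (u/2)^2" using cos_double_sin[of "u/2"] by simp
  moreover have "sin (u/2)^2 \<le> (u/2)^2" using abs_sin_x_le_abs_x[of "u/2"]
    by (metis abs_ge_zero power2_abs power_mono)
  ultimately show ?thesis by (simp add: power2_eq_square)
qed

lemma circ_lower:
  fixes x :: complex and R \<delta> s t w :: real
  assumes xs: "cmod x = s" and s0: "0 < s" and rex: "0 \<le> Re x" and t0: "0 < t"
    and up: "s + t \<le> R" and lo: "R - \<delta>/2 \<le> s + t" and R1: "1 \<le> R" and d0: "0 < \<delta>" and d1: "\<delta> \<le> 1"
    and w0: "0 < w" and w1: "w \<le> 1/4" and stw: "s * t * w^2 \<le> \<delta>/4"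
  shows "w/pi \<le> circ_avg (indicator {z. R-\<delta> \<le> cmod z \<and> cmod z \<le> R}) x t"
proof -
  define P where "P = {\<theta>. R-\<delta> \<le> cmod (x - complex_of_real t * cis \<theta>) \<and> cmod (x - complex_of_real t * cis \<theta>) \<le> R}"
  have Pm: "P \<in> sets borel" unfolding P_def by measurable
  define c where "c = Arg x + pi"
  have "\<bar>Arg x\<bar> \<le> pi/2" using Arg_Re_nonneg rex by blast
  hence cw: "0 \<le> c - w" "c + w \<le> 2*pi" using w1 pi_gt3 unfolding c_def by auto
  have sub: "{c-w..c+w} \<subseteq> {0..2*pi} \<inter> P"
  proof
    fix \<theta> assume th: "\<theta> \<in> {c-w..c+w}"
    define u where "u = \<theta> - c"
    have u: "\<bar>u\<bar> \<le> w" using th unfolding u_def by auto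
    have xe: "x = complex_of_real s * exp (\<i> * complex_of_real (Arg x))"
      using rcis_cmod_Arg[of x] xs by (simp add: rcis_def cis_conv_exp)
    have sq: "(cmod (x - complex_of_real t * cis \<theta>))^2 = s^2 + t^2 - 2 * s * t * cos (Arg x - \<theta>)"
      apply (subst xe) unfolding cis_conv_exp by (rule cmod_diff_squared)
    have "Arg x - \<theta> = - u - pi" unfolding u_def c_def by simp
    hence "cos (Arg x - \<theta>) = - cos u" by (simp add: cos_diff)
    moreover have "u^2 \<le> w^2" using u by (metis abs_ge_zero power2_abs power_mono)
    moreover have "1 - u^2/2 \<le> cos u" by (rule cos_lb)
    ultimately have "cos u \<ge> 1 - w^2/2" by linarith
    hence "2 * s * t * cos u \<ge> 2 * s * t * (1 - w^2/2)" using s0 t0 by (intro mult_left_mono) auto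
    hence "(cmod (x - complex_of_real t * cis \<theta>))^2 \<ge> (s+t)^2 - s * t * w^2"
      using sq \<open>cos (Arg x - \<theta>) = - cos u\<close> by (simp add: power2_eq_square algebra_simps)
    moreover have "(s+t)^2 \<ge> (R - \<delta>/2)^2" using lo d1 R1 d0 by (intro power_mono) auto
    moreover have "(R - \<delta>/2)^2 - (R-\<delta>)^2 \<ge> \<delta>/4"
    proof -
      have "(R - \<delta>/2)^2 - (R-\<delta>)^2 = R*\<delta> - 3*\<delta>^2/4" by (simp add: power2_eq_square algebra_simps)
      moreover have "R*\<delta> \<ge> \<delta>" using R1 d0 by simp
      moreover have "\<delta>^2 \<le> \<delta>" using d0 d1 by (simp add: power2_eq_square mult_le_cancel_right1)
      ultimately show ?thesis by linarith
    qed
    ultimately have "(cmod (x - complex_of_real t * cis \<theta>))^2 \<ge> (R-\<delta>)^2" using stw by linarith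
    hence l1: "R - \<delta> \<le> cmod (x - complex_of_real t * cis \<theta>)"
      by (rule power2_le_imp_le) auto
    have "cmod (x - complex_of_real t * cis \<theta>) \<le> cmod x + cmod (complex_of_real t * cis \<theta>)"
      by (rule norm_triangle_ineq4)
    also have "\<dots> = s + t" using xs t0 by (simp add: norm_mult)
    finally have l2: "cmod (x - complex_of_real t * cis \<theta>) \<le> R" using up by linarith
    show "\<theta> \<in> {0..2*pi} \<inter> P" using l1 l2 th cw unfolding P_def by auto
  qed
  have ind: "indicator {z. R-\<delta> \<le> cmod z \<and> cmod z \<le> R} (x - complex_of_real t * cis \<theta>) = (indicator P \<theta> :: real)" for \<theta>
    unfolding P_def by (simp add: indicator_def)
  have "circ_avg (indicator {z. R-\<delta> \<le> cmod z \<and> cmod z \<le> R}) x t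
      = (1/(2*pi)) * measure lborel ({0..2*pi} \<inter> P)"
    unfolding circ_avg_def set_lebesgue_integral_def ind
    by (simp add: indicator_inter_arith[symmetric] Bochner_Integration.integral_indicator)
  moreover have "measure lborel {c-w..c+w} \<le> measure lborel ({0..2*pi} \<inter> P)"
    apply (rule measure_mono_fmeasurable[OF sub])
     apply simp
    apply (rule fmeasurableI2[of "{0..2*pi}"])
    using Pm by (auto simp: fmeasurable_def)
  moreover have "measure lborel {c-w..c+w} = 2*w" using w0 by simp
  ultimately show ?thesis using pi_gt3 by (simp add: divide_simps)
qed



lemma cov_num_le:
  assumes "F \<subseteq> (\<Union>i<n. {c i .. c i + \<delta>})"
  shows "cov_num F \<delta> \<le> n"
  unfolding cov_num_def using assms by (intro Least_le) blast

lemma sep_points: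
  fixes F :: "real set" and a b \<delta> :: real
  assumes d: "0 < \<delta>" and F: "F \<subseteq> {a..b}"
  shows "\<exists>T. finite T \<and> T \<subseteq> F \<and> (\<forall>t\<in>T. \<forall>t'\<in>T. t \<noteq> t' \<longrightarrow> \<delta> \<le> \<bar>t - t'\<bar>)
             \<and> real (cov_num F \<delta>) \<le> 2 * real (card T)"
proof -
  define bin where "bin k = {a + real k * \<delta> .. a + real k * \<delta> + \<delta>}" for k :: nat
  define K where "K = Suc (nat \<lceil>(b - a) / \<delta>\<rceil>)"
  define B where "B = {k. k < K \<and> F \<inter> bin k \<noteq> {}}"
  have finB: "finite B" unfolding B_def by auto
  have cover: "F \<subseteq> (\<Union>k\<in>B. bin k)"
  proof
    fix t assume t: "t \<in> F"
    define k where "k = nat \<lfloor>(t - a) / \<delta>\<rfloor>"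
    have ta: "a \<le> t" "t \<le> b" using t F by auto
    have "0 \<le> (t - a) / \<delta>" using ta d by simp
    hence kk: "real k \<le> (t - a) / \<delta>" "(t - a) / \<delta> < real k + 1"
      unfolding k_def by linarith+
    hence "real k * \<delta> \<le> t - a" "t - a < (real k + 1) * \<delta>" using d by (simp_all add: field_simps)
    hence tk: "t \<in> bin k" unfolding bin_def by (auto simp: algebra_simps)
    have "(t - a) / \<delta> \<le> (b - a) / \<delta>" using ta d by (simp add: divide_right_mono)
    hence "k < K" unfolding K_def k_def using kk by linarith
    thus "t \<in> (\<Union>k\<in>B. bin k)" using tk t unfolding B_def by blast
  qed
  obtain g where g: "bij_betw g {..<card B} B" using ex_bij_betw_nat_finite[OF finB] atLeast0LessThan by metis
  have "F \<subseteq> (\<Union>i<card B. {a + real (g i) * \<delta> .. a + real (g i) * \<delta> + \<delta>})"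
  proof -
    have "(\<Union>k\<in>B. bin k) = (\<Union>i<card B. bin (g i))" using g by (metis bij_betw_def image_image UNION_singleton_eq_range image_UN SUP_image)
    thus ?thesis using cover unfolding bin_def by simp
  qed
  hence covB: "cov_num F \<delta> \<le> card B" by (rule cov_num_le)
  define B0 where "B0 = {k\<in>B. even k}"
  define B1 where "B1 = {k\<in>B. odd k}"
  have "card B = card B0 + card B1"
  proof -
    have "B = B0 \<union> B1" "B0 \<inter> B1 = {}" unfolding B0_def B1_def by auto
    thus ?thesis using finB by (metis card_Un_disjoint finite_Un)
  qed
  then obtain Bp where Bp: "Bp \<subseteq> B" "card B \<le> 2 * card Bp" and par: "\<forall>k\<in>Bp. \<forall>k'\<in>Bp. k \<noteq> k' \<longrightarrow> k + 2 \<le> k' \<or> k' + 2 \<le> k"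
  proof -
    have p0: "\<forall>k\<in>B0. \<forall>k'\<in>B0. k \<noteq> k' \<longrightarrow> k + 2 \<le> k' \<or> k' + 2 \<le> k" unfolding B0_def
      by (auto elim!: evenE) 
    have p1: "\<forall>k\<in>B1. \<forall>k'\<in>B1. k \<noteq> k' \<longrightarrow> k + 2 \<le> k' \<or> k' + 2 \<le> k" unfolding B1_def
      by (auto elim!: oddE)
    assume r: "\<And>Bp. Bp \<subseteq> B \<Longrightarrow> card B \<le> 2 * card Bp \<Longrightarrow> \<forall>k\<in>Bp. \<forall>k'\<in>Bp. k \<noteq> k' \<longrightarrow> k + 2 \<le> k' \<or> k' + 2 \<le> k \<Longrightarrow> thesis"
    show thesis
    proof (cases "card B1 \<le> card B0")
      case True thus ?thesis using r[of B0] p0 \<open>card B = card B0 + card B1\<close> unfolding B0_def by auto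
    next
      case False thus ?thesis using r[of B1] p1 \<open>card B = card B0 + card B1\<close> unfolding B1_def by auto
    qed
  qed
  define pick where "pick k = (SOME t. t \<in> F \<inter> bin k)" for k
  have pk: "pick k \<in> F \<inter> bin k" if "k \<in> B" for k
    using that unfolding pick_def B_def by (metis (mono_tags, lifting) ex_in_conv mem_Collect_eq someI_ex)
  have sep: "\<delta> \<le> \<bar>pick k - pick k'\<bar>" if "k \<in> Bp" "k' \<in> Bp" "k \<noteq> k'" for k k'
  proof -
    have a1: "pick k \<in> bin k" "pick k' \<in> bin k'" using pk that Bp(1) by auto
    show ?thesis
    proof (cases "k + 2 \<le> k'")
      case True
      hence "real k + 2 \<le> real k'" by simp
      hence "(real k + 2) * \<delta> \<le> real k' * \<delta>" using d by (intro mult_right_mono) auto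
      thus ?thesis using a1 unfolding bin_def by (auto simp: algebra_simps)
    next
      case False
      hence "k' + 2 \<le> k" using par that by auto
      hence "real k' + 2 \<le> real k" by simp
      hence "(real k' + 2) * \<delta> \<le> real k * \<delta>" using d by (intro mult_right_mono) auto
      thus ?thesis using a1 unfolding bin_def by (auto simp: algebra_simps)
    qed
  qed
  have inj: "inj_on pick Bp"
    by (rule inj_onI) (use sep d in force)
  define T where "T = pick ` Bp"
  have "finite T" unfolding T_def using Bp(1) finB finite_subset by blast
  moreover have "T \<subseteq> F" unfolding T_def using pk Bp(1) by auto
  moreover have "\<forall>t\<in>T. \<forall>t'\<in>T. t \<noteq> t' \<longrightarrow> \<delta> \<le> \<bar>t - t'\<bar>" unfolding T_def using sep by auto
  moreover have "card T = card Bp" unfolding T_def using inj by (rule card_image)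
  ultimately show ?thesis using covB Bp(2)
    by (intro exI[of _ T]) (auto simp del: of_nat_mult simp add: of_nat_mult[symmetric])
qed



lemma alg:
  fixes \<delta> L N q l :: real
  assumes d: "0 < \<delta>" and L: "0 < L" and N: "0 \<le> N" and q: "0 < q"
    and l: "l = sqrt (\<delta>/L) / 4 / (2*pi)"
  shows "\<delta> powr (1/2 + 1/q) * L powr (1/q - 1/2) * N powr (1/q)
     = (8*pi*(8/pi) powr (1/q)) * (l * (N * (pi*L*\<delta>/8)) powr (1/q))"
proof -
  have e1: "(N * (pi*L*\<delta>/8)) powr (1/q) = N powr (1/q) * (pi/8) powr (1/q) * L powr (1/q) * \<delta> powr (1/q)"
  proof -
    have eq: "N * (pi*L*\<delta>/8) = ((N * (pi/8)) * L) * \<delta>" by simp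
    have p0: "0 \<le> pi/8" by simp
    show ?thesis unfolding eq
      using powr_mult[of "N*(pi/8)*L" \<delta> "1/q"] powr_mult[of "N*(pi/8)" L "1/q"] powr_mult[of N "pi/8" "1/q"] d L N p0
      by simp
  qed
  have e2: "sqrt (\<delta>/L) = \<delta> powr (1/2) / L powr (1/2)"
    using d L by (simp add: powr_half_sqrt[symmetric] powr_divide)
  have e3: "\<delta> powr (1/2 + 1/q) = \<delta> powr (1/2) * \<delta> powr (1/q)" by (simp add: powr_add)
  have e4: "L powr (1/q - 1/2) = L powr (1/q) / L powr (1/2)" by (simp add: powr_diff)
  have e5: "(8/pi) powr (1/q) * (pi/8) powr (1/q) = 1"
    by (subst powr_mult[symmetric]) auto
  have Lh: "L powr (1/2) > 0" using L by simp
  show ?thesis unfolding e1 l e2 e3 e4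
    using e5 Lh pi_gt3 by (simp add: field_simps)
qed

theorem proposition4p2:
  fixes E :: "real set" and p q :: real
  assumes "E \<subseteq> {1..2}"
    and "1 \<le> p" and "1 \<le> q"
    and bdd: "\<exists>C :: real. \<forall>f. radial f \<and> f \<in> borel_measurable lebesgue
                 \<and> lorentz_p1 p f < \<infinity>
               \<longrightarrow> weak_Lq q (max_sph E f) \<le> ennreal C * lorentz_p1 p f"
  shows "\<exists>C :: real. \<forall>a b \<delta> :: real.
           1 \<le> a \<and> b \<le> 2 \<and> 0 < \<delta> \<and> \<delta> \<le> b - a \<and> b - a \<le> 1 \<longrightarrow>
           \<delta> powr (1/2 + 1/q) * (b - a) powr (1/q - 1/2)
             * real (cov_num (E \<inter> {a..b}) \<delta>) powr (1/q)
           \<le> C * \<delta> powr (1/p)"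
proof -
  note E12 = assms(1) and p1 = assms(2) and q1 = assms(3)
  obtain C0 where C0: "\<And>f. radial f \<Longrightarrow> f \<in> borel_measurable lebesgue \<Longrightarrow> lorentz_p1 p f < \<infinity>
               \<Longrightarrow> weak_Lq q (max_sph E f) \<le> ennreal C0 * lorentz_p1 p f" using bdd by blast
  define C1 where "C1 = max C0 0"
  have C1: "0 \<le> C1" "ennreal C0 \<le> ennreal C1" unfolding C1_def by (auto intro: ennreal_leI)
  define C where "C = 8*pi*(8/pi) powr (1/q) * C1 * p * (6*pi) powr (1/p)"
  show ?thesis
  proof (intro exI[of _ C] allI impI)
    fix a b \<delta> :: real
    assume H: "1 \<le> a \<and> b \<le> 2 \<and> 0 < \<delta> \<and> \<delta> \<le> b - a \<and> b - a \<le> 1"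
    define L where "L = b - a"
    have a1: "1 \<le> a" and b2: "b \<le> 2" and d0: "0 < \<delta>" and dL: "\<delta> \<le> L" and L1: "L \<le> 1"
      using H unfolding L_def by auto
    have L0: "0 < L" using d0 dL by simp
    define F where "F = E \<inter> {a..b}"
    obtain T where T: "finite T" "T \<subseteq> F" and sepT: "\<forall>t\<in>T. \<forall>t'\<in>T. t \<noteq> t' \<longrightarrow> \<delta> \<le> \<bar>t - t'\<bar>"
      and NT: "real (cov_num F \<delta>) \<le> 2 * real (card T)"
      using sep_points[OF d0, of F a b] unfolding F_def by auto
    have tE: "t \<in> E" "a \<le> t" "t \<le> b" if "t \<in> T" for t using that T(2) unfolding F_def by auto
    define R where "R = b + L"
    have R1: "1 \<le> R" "R \<le> 3" using a1 b2 L1 L0 unfolding R_def L_def by auto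
    define f where "f = (indicator {z. R-\<delta> \<le> cmod z \<and> cmod z \<le> R} :: complex \<Rightarrow> real)"
    define V where "V = pi*(R^2 - (R-\<delta>)^2)"
    have lor: "lorentz_p1 p f \<le> ennreal (p * V powr (1/p))"
      unfolding f_def V_def using p1 d0 dL L1 R1 by (intro lorentz_ann) auto
    have rad: "radial f" unfolding radial_def f_def by (simp add: indicator_def)
    have fm: "f \<in> borel_measurable lebesgue" unfolding f_def
      apply (rule borel_measurable_indicator) using ann_borel by auto
    have fin: "lorentz_p1 p f < \<infinity>" using lor by (simp add: order_le_less_trans)
    have "weak_Lq q (max_sph E f) \<le> ennreal C0 * lorentz_p1 p f" by (rule C0[OF rad fm fin])
    also have "\<dots> \<le> ennreal C1 * ennreal (p * V powr (1/p))" using C1 lor by (intro mult_mono) auto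
    also have "\<dots> = ennreal (C1 * (p * V powr (1/p)))" using C1 p1 by (simp add: ennreal_mult)
    finally have up: "weak_Lq q (max_sph E f) \<le> ennreal (C1 * (p * V powr (1/p)))" .
    define w where "w = sqrt (\<delta>/L) / 4"
    define l where "l = w / (2*pi)"
    have w0: "0 < w" unfolding w_def using d0 L0 by simp
    have w1: "w \<le> 1/4" unfolding w_def using d0 L0 dL by (simp add: real_sqrt_le_1_iff)
    have l0: "0 < l" unfolding l_def using w0 by simp
    define X where "X = {x. 0 \<le> Re x \<and> (\<exists>t\<in>T. R - t - \<delta>/2 \<le> cmod x \<and> cmod x \<le> R - t)}"
    have Xm: "X \<in> sets borel" unfolding X_def using T(1) by measurable
    have Xsub: "X \<subseteq> {x. ennreal l < max_sph E f x}"
    proof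
      fix x assume "x \<in> X"
      then obtain t where t: "t \<in> T" "R - t - \<delta>/2 \<le> cmod x" "cmod x \<le> R - t" and rex: "0 \<le> Re x"
        unfolding X_def by auto
      have ta: "t \<in> E" "a \<le> t" "t \<le> b" using tE[OF t(1)] by auto
      have t12: "1 \<le> t" "t \<le> 2" using ta E12 by auto
      have s0: "0 < cmod x" using t ta dL d0 unfolding R_def L_def by linarith
      have s2: "cmod x \<le> 2*L" using t(3) ta(2) unfolding R_def L_def by argo
      have "cmod x * t \<le> 2*L*2" using s2 t12 s0 L0 by (intro mult_mono) auto
      hence "cmod x * t * w^2 \<le> 2*L*2 * w^2" by (intro mult_right_mono) auto
      moreover have "w^2 = \<delta>/L/16" unfolding w_def using d0 L0 by (simp add: power_divide)
      moreover have "2*L*2*(\<delta>/L/16) = \<delta>/4" using L0 by (simp add: field_simps)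
      ultimately have stw: "cmod x * t * w^2 \<le> \<delta>/4" by (simp only:)
      have "w/pi \<le> circ_avg f x t" unfolding f_def
        by (rule circ_lower[OF refl s0 rex]) (use t t12 R1 d0 dL L1 w0 w1 stw in auto)
      hence "ennreal (w/pi) \<le> ennreal \<bar>circ_avg f x t\<bar>" by (intro ennreal_leI) auto
      also have "\<dots> \<le> max_sph E f x" unfolding max_sph_def using ta by (intro SUP_upper) auto
      finally have "ennreal (w/pi) \<le> max_sph E f x" .
      moreover have "ennreal l < ennreal (w/pi)" unfolding l_def using w0 pi_gt3
        by (subst ennreal_less_iff) (auto simp: field_simps)
      ultimately show "x \<in> {x. ennreal l < max_sph E f x}" by simp
    qed
    have "(\<lambda>x. (-1) *\<^sub>R x + 0) ` X = {x. 0 \<le> Re (-x) \<and> (\<exists>t\<in>T. R - t - \<delta>/2 \<le> cmod (-x) \<and> cmod (-x) \<le> R - t)}"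
      unfolding X_def by (auto simp: image_iff intro!: exI[where x="- x" for x]) blast+
    also have "\<dots> \<in> sets borel" using T(1) by measurable
    finally have Xnm: "(\<lambda>x. (-1) *\<^sub>R x + 0) ` X \<in> sets lebesgue" by auto
    define A where "A t = {z::complex. R - t - \<delta>/2 \<le> cmod z \<and> cmod z \<le> R - t}" for t
    have Ameas: "emeasure lebesgue (A t) = ennreal (pi*((R-t)^2 - (R-t-\<delta>/2)^2))" if "t \<in> T" for t
      unfolding A_def using tE[OF that] dL d0 unfolding R_def L_def by (intro ann_meas) auto
    have Alow: "pi*L*\<delta>/2 \<le> pi*((R-t)^2 - (R-t-\<delta>/2)^2)" if "t \<in> T" for t
    proof -
      have "(R-t)^2 - (R-t-\<delta>/2)^2 = \<delta>/2 * (2*(R-t) - \<delta>/2)" by (simp add: power2_eq_square algebra_simps)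
      moreover have "L \<le> 2*(R-t) - \<delta>/2" using tE[OF that] dL d0 unfolding R_def L_def by argo
      ultimately have "L * (\<delta>/2) \<le> (R-t)^2 - (R-t-\<delta>/2)^2" using d0 by (simp add: mult_right_mono)
      thus ?thesis by (simp add: mult_left_mono)
    qed
    have disj: "disjoint_family_on A T"
      unfolding disjoint_family_on_def
    proof (intro ballI impI)
      fix t t' assume tt: "t \<in> T" "t' \<in> T" "t \<noteq> t'"
      have "\<delta> \<le> \<bar>t - t'\<bar>" using sepT tt by auto
      thus "A t \<inter> A t' = {}" unfolding A_def using d0 by auto
    qed
    have Asets: "A ` T \<subseteq> sets lebesgue" unfolding A_def using ann_borel by auto
    have "ennreal (real (card T) * (pi*L*\<delta>/2)) = (\<Sum>t\<in>T. ennreal (pi*L*\<delta>/2))"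
    proof -
      have "ennreal (real (card T) * (pi*L*\<delta>/2)) = ennreal (real (card T)) * ennreal (pi*L*\<delta>/2)"
        using d0 L0 by (intro ennreal_mult) auto
      thus ?thesis by (simp add: ennreal_of_nat_eq_real_of_nat)
    qed
    also have "\<dots> \<le> (\<Sum>t\<in>T. emeasure lebesgue (A t))"
      using Ameas Alow by (intro sum_mono) (auto intro: ennreal_leI)
    also have "\<dots> = emeasure lebesgue (\<Union>(A ` T))" using Asets disj T(1) by (rule sum_emeasure)
    also have "\<dots> \<le> emeasure lebesgue (X \<union> (\<lambda>x. (-1) *\<^sub>R x + 0) ` X)"
    proof (rule emeasure_mono)
      show "\<Union>(A ` T) \<subseteq> X \<union> (\<lambda>x. (-1) *\<^sub>R x + 0) ` X"
      proof
        fix z assume "z \<in> \<Union>(A ` T)"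
        then obtain t where "t \<in> T" "z \<in> A t" by auto
        show "z \<in> X \<union> (\<lambda>x. (-1) *\<^sub>R x + 0) ` X"
        proof (cases "0 \<le> Re z")
          case True thus ?thesis using \<open>t \<in> T\<close> \<open>z \<in> A t\<close> unfolding X_def A_def by auto
        next
          case False
          hence "-z \<in> X" using \<open>t \<in> T\<close> \<open>z \<in> A t\<close> unfolding X_def A_def by auto
          moreover have "z = (-1) *\<^sub>R (-z) + 0" by simp
          ultimately show ?thesis by blast
        qed
      qed
      show "X \<union> (\<lambda>x. (-1) *\<^sub>R x + 0) ` X \<in> sets lebesgue" using Xm Xnm by auto
    qed
    also have "\<dots> \<le> emeasure lebesgue X + emeasure lebesgue ((\<lambda>x. (-1) *\<^sub>R x + 0) ` X)"
      using Xm Xnm by (intro emeasure_subadditive) auto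
    also have "\<dots> = 2 * emeasure lebesgue X"
      using emeasure_lebesgue_affine[of "-1" 0 X] by (simp add: mult_2)
    finally have mX2: "ennreal (real (card T) * (pi*L*\<delta>/2)) \<le> 2 * emeasure lebesgue X" .
    have mX: "ennreal (real (card T) * (pi*L*\<delta>/4)) \<le> emeasure lebesgue X"
    proof (cases "emeasure lebesgue X")
      case (real r)
      have e2: "(2::ennreal) * ennreal r = ennreal (2*r)" using ennreal_mult[of 2 r] real by simp
      have "ennreal (real (card T) * (pi*L*\<delta>/2)) \<le> ennreal (2*r)" using mX2 real e2 by simp
      hence "real (card T) * (pi*L*\<delta>/2) \<le> 2 * r"
        using real by (subst (asm) ennreal_le_iff) auto
      hence "real (card T) * (pi*L*\<delta>/4) \<le> r" by simp
      thus ?thesis using real by (metis ennreal_leI)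
    qed simp
    have "ennreal (real (card T) * (pi*L*\<delta>/4)) \<le> distrib (max_sph E f) l"
    proof -
      have "X \<in> sets lebesgue" using Xm by auto
      hence "emeasure lebesgue X \<le> outer_leb {x. ennreal l < max_sph E f x}" using outer_leb_ge Xsub by blast
      thus ?thesis unfolding distrib_def using mX by (rule order_trans[rotated])
    qed
    hence "ennpow (ennreal (real (card T) * (pi*L*\<delta>/4))) (1/q) \<le> ennpow (distrib (max_sph E f) l) (1/q)"
      using q1 by (intro ennpow_mono) auto
    hence "ennreal ((real (card T) * (pi*L*\<delta>/4)) powr (1/q)) \<le> ennpow (distrib (max_sph E f) l) (1/q)"
      using d0 L0 by (subst ennpow_ennreal[symmetric]) auto
    hence "ennreal l * ennreal ((real (card T) * (pi*L*\<delta>/4)) powr (1/q)) \<le> weak_Lq q (max_sph E f)"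
      unfolding weak_Lq_def using l0
      by (intro order_trans[OF mult_left_mono SUP_upper[of l]]) auto
    hence "ennreal (l * (real (card T) * (pi*L*\<delta>/4)) powr (1/q)) \<le> ennreal (C1 * (p * V powr (1/p)))"
      using up l0 by (simp add: ennreal_mult)
    hence key: "l * (real (card T) * (pi*L*\<delta>/4)) powr (1/q) \<le> C1 * (p * V powr (1/p))"
      using C1 p1 by (subst (asm) ennreal_le_iff) (auto intro!: mult_nonneg_nonneg)
    define N where "N = real (cov_num F \<delta>)"
    have N0: "0 \<le> N" unfolding N_def by simp
    have "N * (pi*L*\<delta>/8) \<le> real (card T) * (pi*L*\<delta>/4)"
      using NT d0 L0 unfolding N_def by (simp add: field_simps mult_right_mono)
    hence "(N * (pi*L*\<delta>/8)) powr (1/q) \<le> (real (card T) * (pi*L*\<delta>/4)) powr (1/q)"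
      using N0 d0 L0 q1 by (intro powr_mono2) auto
    hence k2: "l * (N * (pi*L*\<delta>/8)) powr (1/q) \<le> C1 * (p * V powr (1/p))"
      using key l0 by (meson mult_left_mono less_imp_le order_trans)
    have "V \<le> 6*pi*\<delta>"
    proof -
      have "V = pi * (2*R*\<delta> - \<delta>^2)" unfolding V_def by (simp add: power2_eq_square algebra_simps)
      also have "\<dots> \<le> pi * (6*\<delta>)"
      proof (intro mult_left_mono)
        have h1: "R * \<delta> \<le> 3 * \<delta>" using R1 d0 by (intro mult_right_mono) auto
        have h2: "0 \<le> \<delta>^2" by simp
        have "2*R*\<delta> = 2*(R*\<delta>)" by simp
        thus "2*R*\<delta> - \<delta>^2 \<le> 6*\<delta>" using h1 h2 by linarith
      qed simp
      finally show ?thesis by simp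
    qed
    moreover have "0 \<le> V" unfolding V_def using R1 d0 dL L1 by (auto intro!: mult_nonneg_nonneg power_mono)
    ultimately have "V powr (1/p) \<le> (6*pi*\<delta>) powr (1/p)" using p1 by (intro powr_mono2) auto
    also have "\<dots> = (6*pi) powr (1/p) * \<delta> powr (1/p)" using d0 by (simp add: powr_mult)
    finally have "C1 * (p * V powr (1/p)) \<le> C1 * (p * ((6*pi) powr (1/p) * \<delta> powr (1/p)))"
      using C1 p1 by (intro mult_left_mono) auto
    with k2 have k3: "l * (N * (pi*L*\<delta>/8)) powr (1/q) \<le> C1 * p * (6*pi) powr (1/p) * \<delta> powr (1/p)"
      by (simp add: mult.assoc)
    have "\<delta> powr (1/2 + 1/q) * L powr (1/q - 1/2) * N powr (1/q)
       = (8*pi*(8/pi) powr (1/q)) * (l * (N * (pi*L*\<delta>/8)) powr (1/q))"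
      using d0 L0 N0 q1 by (intro alg) (auto simp: l_def w_def)
    also have "\<dots> \<le> (8*pi*(8/pi) powr (1/q)) * (C1 * p * (6*pi) powr (1/p) * \<delta> powr (1/p))"
      using k3 by (intro mult_left_mono) auto
    also have "\<dots> = C * \<delta> powr (1/p)" unfolding C_def by (simp add: mult.assoc)
    finally show "\<delta> powr (1/2 + 1/q) * (b - a) powr (1/q - 1/2) * real (cov_num (E \<inter> {a..b}) \<delta>) powr (1/q)
           \<le> C * \<delta> powr (1/p)" unfolding N_def L_def F_def .
  qed
qed


end
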